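(* Let $\mathcal F_{n,s,d}$ denote the class of $s$-sparse polynomials $f:\{0,1\}^n\to\mathbb{R}$ of degree at most $d$ all of whose non-zero M\"obius coefficients lie in $[s]=\{1,2,\dots,s\}$. Any deterministic algorithm that recovers every $f\in\mathcal F_{n,s,d}$ from evaluation queries (queries $\mathbf x\in\{0,1\}^n$ answered by $f(\mathbf x)$) must use at least $$\Omega\!\left(\frac{sd\log(n/d)}{\log s}\right)$$ queries in the worst case.
   Context: Every $f:\{0,1\}^n\to\mathbb{R}$ has a unique expansion $f(\mathbf x)=\sum_{\mathbf k\in\{0,1\}^n,\ \mathbf k\le\mathbf x}F(\mathbf k)$ (real addition, $\le$ componentwise); the $F(\mathbf k)$ are its M\"obius coefficients. $f$ is $s$-sparse if at most $s$ of its M\"obius coefficients are non-zero, and has degree at most $d$ if every $\mathbf k$ with $F(\mathbf k)\ne0$ has Hamming weight at most $d$. *)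

theory Defs
  imports Complex_Main
begin

text \<open>Points of the cube {0,1}^n are represented as subsets x of {..<n}
  (x = set of coordinates equal to 1); the componentwise order is inclusion.
  A function on the cube is a map nat set => real, taken to be 0 off the cube.\<close>

definition poly_of :: "nat \<Rightarrow> (nat set \<Rightarrow> real) \<Rightarrow> (nat set \<Rightarrow> real)" where
  "poly_of n F = (\<lambda>x. if x \<subseteq> {..<n} then (\<Sum>K\<in>Pow x. F K) else 0)"

definition good_coeffs :: "nat \<Rightarrow> nat \<Rightarrow> nat \<Rightarrow> (nat set \<Rightarrow> real) \<Rightarrow> bool" where
  "good_coeffs n s d F \<longleftrightarrow>
     (\<forall>K. F K \<noteq> 0 \<longrightarrow> K \<subseteq> {..<n} \<and> card K \<le> d \<and> F K \<in> real ` {1..s})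
     \<and> card {K. F K \<noteq> 0} \<le> s"

definition sparse_class :: "nat \<Rightarrow> nat \<Rightarrow> nat \<Rightarrow> (nat set \<Rightarrow> real) set" where
  "sparse_class n s d = {poly_of n F | F. good_coeffs n s d F}"

text \<open>A deterministic adaptive query algorithm: given the list of answers so far,
  it chooses the next query point. The transcript after q queries.\<close>
fun transcript :: "(real list \<Rightarrow> nat set) \<Rightarrow> (nat set \<Rightarrow> real) \<Rightarrow> nat \<Rightarrow> real list" where
  "transcript Q f 0 = []"
| "transcript Q f (Suc q) = (let h = transcript Q f q in h @ [f (Q h)])"

text \<open>The algorithm recovers every member of C with q queries iff distinct members
  produce distinct transcripts (the output is a function of the transcript).\<close>
definition recovers :: "(real list \<Rightarrow> nat set) \<Rightarrow> nat \<Rightarrow> (nat set \<Rightarrow> real) set \<Rightarrow> bool" where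
  "recovers Q q C \<longleftrightarrow> inj_on (\<lambda>f. transcript Q f q) C"

end

theory Submission
  imports Defs "HOL-Library.FuncSet"
begin

lemma moebius_inj:
  assumes F: "\<And>K. F K \<noteq> 0 \<Longrightarrow> K \<subseteq> {..<n}"
      and G: "\<And>K. G K \<noteq> 0 \<Longrightarrow> K \<subseteq> {..<n}"
      and eq: "poly_of n F = poly_of n G"
  shows "F = G"
proof
  fix K
  show "F K = G K"
  proof (cases "K \<subseteq> {..<n}")
    case False
    then show ?thesis using F G by metis
  next
    case True
    have "\<forall>K. K \<subseteq> {..<n} \<longrightarrow> card K = m \<longrightarrow> F K = G K" for m
    proof (induction m rule: less_induct)
      case (less m)
      show ?case
      proof (intro allI impI)
        fix K assume K: "K \<subseteq> {..<n}" and cK: "card K = m"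
        have fin: "finite K" using K finite_subset by blast
        have "(\<Sum>J\<in>Pow K. F J) = (\<Sum>J\<in>Pow K. G J)"
          using fun_cong[OF eq, of K] K by (simp add: poly_of_def)
        moreover have "Pow K = insert K (Pow K - {K})" by auto
        ultimately have e: "F K + (\<Sum>J\<in>Pow K - {K}. F J) = G K + (\<Sum>J\<in>Pow K - {K}. G J)"
          using fin by (metis Diff_iff finite_Diff finite_Pow_iff singletonI sum.insert)
        have "(\<Sum>J\<in>Pow K - {K}. F J) = (\<Sum>J\<in>Pow K - {K}. G J)"
        proof (rule sum.cong)
          fix J assume "J \<in> Pow K - {K}"
          then have "J \<subset> K" by auto
          then have "card J < m" using cK fin psubset_card_mono by blast
          then show "F J = G J" using less \<open>J \<subset> K\<close> K by blast
        qed simp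
        with e show "F K = G K" by simp
      qed
    qed
    then show ?thesis using True by blast
  qed
qed

lemma sum_Nats: "(\<And>x. x \<in> A \<Longrightarrow> f x \<in> \<nat>) \<Longrightarrow> sum f A \<in> (\<nat>::real set)"
  by (induction A rule: infinite_finite_induct) (auto intro: Nats_add)

lemma value_bound:
  assumes g: "good_coeffs n s d F"
  shows "poly_of n F x \<in> real ` {0..s^2}"
proof (cases "x \<subseteq> {..<n}")
  case False
  then show ?thesis by (force simp: poly_of_def)
next
  case True
  define supp where "supp = {K. F K \<noteq> 0}"
  have sub: "supp \<subseteq> Pow {..<n}" using g by (auto simp: good_coeffs_def supp_def)
  have fs: "finite supp" using sub finite_subset by blast
  have cs: "card supp \<le> s" using g by (simp add: good_coeffs_def supp_def)
  have fx: "finite (Pow x)" using True by (meson finite_Pow_iff finite_lessThan finite_subset)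
  have red: "(\<Sum>K\<in>Pow x. F K) = (\<Sum>K\<in>Pow x \<inter> supp. F K)"
    by (rule sum.mono_neutral_right) (use fx in \<open>auto simp: supp_def\<close>)
  have nat: "F K \<in> \<nat>" if "K \<in> supp" for K
    using g that by (force simp: good_coeffs_def supp_def)
  have le: "F K \<le> real s" if "K \<in> supp" for K
    using g that by (force simp: good_coeffs_def supp_def)
  have "(\<Sum>K\<in>Pow x \<inter> supp. F K) \<in> \<nat>"
    using nat by (intro sum_Nats) auto
  then obtain m where m: "(\<Sum>K\<in>Pow x \<inter> supp. F K) = real m" by (metis Nats_cases)
  have "(\<Sum>K\<in>Pow x \<inter> supp. F K) \<le> real (card (Pow x \<inter> supp)) * real s"
    using sum_bounded_above[of "Pow x \<inter> supp" F "real s"] le by auto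
  also have "\<dots> \<le> real s * real s"
    using card_mono[OF fs, of "Pow x \<inter> supp"] cs
    by (intro mult_right_mono) auto
  finally have "real m \<le> real s * real s" using m by simp
  then have "m \<le> s^2" by (simp add: power2_eq_square flip: of_nat_mult)
  then show ?thesis using True m red by (auto simp: poly_of_def)
qed

lemma transcript_in:
  assumes "\<And>x. f x \<in> V"
  shows "set (transcript Q f q) \<subseteq> V \<and> length (transcript Q f q) = q"
  by (induction q) (auto simp: Let_def assms)

lemma card_S:
  "card {K. K \<subseteq> {..<n} \<and> card K \<le> d} = (\<Sum>i\<le>d. n choose i)"
proof -
  have "{K. K \<subseteq> {..<n} \<and> card K \<le> d} = (\<Union>i\<in>{..d}. {K. K \<subseteq> {..<n} \<and> card K = i})"
    by auto
  moreover have "card (\<Union>i\<in>{..d}. {K. K \<subseteq> {..<n} \<and> card K = i}) =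
      (\<Sum>i\<le>d. card {K. K \<subseteq> {..<n} \<and> card K = i})"
    by (rule card_UN_disjoint) auto
  moreover have "card {K. K \<subseteq> {..<n} \<and> card K = i} = n choose i" for i
    using n_subsets[of "{..<n}" i] by simp
  ultimately show ?thesis by simp
qed

lemma counting:
  fixes n d s q :: nat and Q :: "real list \<Rightarrow> nat set" and S P
  defines "S \<equiv> {K. K \<subseteq> {..<n} \<and> card K \<le> d}"
  defines "P \<equiv> SIGMA A:{A. A \<subseteq> S \<and> card A = s}. PiE A (\<lambda>_. {1..s})"
  assumes rec: "recovers Q q (sparse_class n s d)"
  shows "(card S choose s) * s^s \<le> (s^2+1)^q"
proof -
  define \<phi> where "\<phi> = (\<lambda>(A::nat set set, v::nat set \<Rightarrow> nat).
     poly_of n (\<lambda>K. if K \<in> A then real (v K) else 0))"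
  have finS: "finite S" unfolding S_def
    by (rule finite_subset[of _ "Pow {..<n}"]) auto
  have cP: "card P = (card S choose s) * s^s"
  proof -
    have "card P = (\<Sum>A\<in>{A. A \<subseteq> S \<and> card A = s}. card (PiE A (\<lambda>_. {1..s})))"
      unfolding P_def using finS
      by (intro card_SigmaI) (auto intro: finite_PiE rev_finite_subset)
    also have "\<dots> = (\<Sum>A\<in>{A. A \<subseteq> S \<and> card A = s}. s^s)"
      by (intro sum.cong refl) (simp add: card_PiE rev_finite_subset[OF finS])
    also have "\<dots> = (card S choose s) * s^s"
      using n_subsets[OF finS, of s] by simp
    finally show ?thesis .
  qed
  have good: "good_coeffs n s d (\<lambda>K. if K \<in> A then real (v K) else 0)"
    if "(A, v) \<in> P" for A v
  proof -
    have A: "A \<subseteq> S" "card A = s" "v \<in> PiE A (\<lambda>_. {1..s})" using that by (auto simp: P_def)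
    have "{K. (if K \<in> A then real (v K) else 0) \<noteq> 0} = A"
      using A(3) by (force simp: PiE_def Pi_def)
    then show ?thesis using A by (auto simp: good_coeffs_def S_def PiE_def Pi_def)
  qed
  have img: "\<phi> ` P \<subseteq> sparse_class n s d"
    using good by (force simp: \<phi>_def sparse_class_def)
  have inj: "inj_on \<phi> P"
  proof (rule inj_onI)
    fix a b assume a: "a \<in> P" and b: "b \<in> P" and e: "\<phi> a = \<phi> b"
    obtain A v where av: "a = (A, v)" by force
    obtain B w where bw: "b = (B, w)" by force
    let ?F = "\<lambda>K. if K \<in> A then real (v K) else 0"
    let ?G = "\<lambda>K. if K \<in> B then real (w K) else 0"
    have gF: "good_coeffs n s d ?F" using good a av by blast
    have gG: "good_coeffs n s d ?G" using good b bw by blast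
    have "?F = ?G"
      by (rule moebius_inj[of _ n]) (use gF gG e av bw in \<open>auto simp: good_coeffs_def \<phi>_def\<close>)
    have vA: "v \<in> PiE A (\<lambda>_. {1..s})" using a av by (auto simp: P_def)
    have wB: "w \<in> PiE B (\<lambda>_. {1..s})" using b bw by (auto simp: P_def)
    have hA: "A = {K. ?F K \<noteq> 0}" using vA by (force simp: PiE_def Pi_def)
    have hB: "B = {K. ?G K \<noteq> 0}" using wB by (force simp: PiE_def Pi_def)
    have hE: "{K. ?F K \<noteq> 0} = {K. ?G K \<noteq> 0}" using \<open>?F = ?G\<close> by (rule arg_cong)
    have AB: "A = B" by (rule trans[OF hA trans[OF hE sym[OF hB]]])
    have "v = w"
    proof
      fix K show "v K = w K"
      proof (cases "K \<in> A")
        case True then show ?thesis using fun_cong[OF \<open>?F = ?G\<close>, of K] AB by simp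
      next
        case False then show ?thesis using vA wB AB by (simp add: PiE_def extensional_def)
      qed
    qed
    then show "a = b" using av bw AB by simp
  qed
  define L where "L = {xs. set xs \<subseteq> real ` {0..s^2} \<and> length xs = q}"
  have finL: "finite L" unfolding L_def by (rule finite_lists_length_eq) simp
  have cL: "card L = (s^2+1)^q"
    unfolding L_def by (subst card_lists_length_eq) (auto simp: card_image)
  have T: "(\<lambda>f. transcript Q f q) ` sparse_class n s d \<subseteq> L"
  proof
    fix t assume "t \<in> (\<lambda>f. transcript Q f q) ` sparse_class n s d"
    then obtain F where g: "good_coeffs n s d F" and t: "t = transcript Q (poly_of n F) q"
      by (auto simp: sparse_class_def)
    show "t \<in> L" using transcript_in[of "poly_of n F" "real ` {0..s^2}" Q q] value_bound[OF g]
      by (simp add: t L_def)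
  qed
  have "card P = card (\<phi> ` P)" using inj by (simp add: card_image)
  also have "\<dots> \<le> card ((\<lambda>f. transcript Q f q) ` \<phi> ` P)"
    using rec img by (simp add: recovers_def card_image inj_on_subset)
  also have "\<dots> \<le> card L"
    using T img finL by (meson card_mono image_mono order_trans)
  finally show ?thesis using cP cL by simp
qed

theorem theorem3:
  "\<exists>c>0. \<forall>n s d q Q.
      1 \<le> d \<longrightarrow> d \<le> n \<longrightarrow> 2 \<le> s \<longrightarrow> s \<le> (\<Sum>i\<le>d. n choose i) \<longrightarrow>
      recovers Q q (sparse_class n s d) \<longrightarrow>
      real q \<ge> c * (real s * real d * ln (real n / real d) / ln (real s))"
proof (intro exI[of _ "1/3"] conjI allI impI)
  fix n s d q :: nat and Q :: "real list \<Rightarrow> nat set"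
  assume d1: "1 \<le> d" and dn: "d \<le> n" and s2: "2 \<le> s"
    and sM: "s \<le> (\<Sum>i\<le>d. n choose i)" and rec: "recovers Q q (sparse_class n s d)"
  define M where "M = card {K. K \<subseteq> {..<n} \<and> card K \<le> d}"
  have M: "M = (\<Sum>i\<le>d. n choose i)" using card_S M_def by simp
  have cnt: "(M choose s) * s^s \<le> (s^2+1)^q" using counting[OF rec] M_def by simp
  have sMs: "s \<le> M" using sM M by simp
  have "(real M / real s)^s \<le> real (M choose s)" using binomial_ge_n_over_k_pow_k[OF sMs] by simp
  then have "(real M / real s)^s * real s ^ s \<le> real (M choose s) * real s ^ s"
    by (intro mult_right_mono) auto
  also have "\<dots> \<le> real ((s^2+1)^q)" using cnt by (metis of_nat_le_iff of_nat_mult of_nat_power)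
  also have "\<dots> \<le> real ((s^3)^q)"
  proof -
    have "s^2 + 1 \<le> s^3"
    proof -
      have h1: "s*s * 2 \<le> s*s * s" using s2 by (intro mult_left_mono) auto
      have h2: "1 \<le> s*s" using s2 by simp
      have "s*s + 1 \<le> s*s*s" using h1 h2 by linarith
      then show ?thesis by (simp add: power3_eq_cube power2_eq_square)
    qed
    then show ?thesis by (intro of_nat_mono power_mono) auto
  qed
  finally have "real M ^ s \<le> real s ^ (3*q)"
    using s2 by (simp add: power_divide power_mult)
  then have "ln (real M ^ s) \<le> ln (real s ^ (3*q))"
    using s2 sMs by (subst ln_le_cancel_iff) auto
  then have A: "real s * ln (real M) \<le> real (3*q) * ln (real s)"
    using s2 sMs by (simp add: ln_realpow)
  have "(real n / real d)^d \<le> real (n choose d)" using binomial_ge_n_over_k_pow_k[OF dn] by simp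
  also have "\<dots> \<le> real M" unfolding M
    by (subst of_nat_le_iff, rule member_le_sum) auto
  finally have "ln ((real n / real d)^d) \<le> ln (real M)"
    using d1 dn sMs s2 by (subst ln_le_cancel_iff) auto
  then have B: "real d * ln (real n / real d) \<le> ln (real M)"
    using d1 dn by (simp add: ln_realpow)
  have "real s * (real d * ln (real n / real d)) \<le> real s * ln (real M)"
    using B by (intro mult_left_mono) auto
  with A have C: "real s * real d * ln (real n / real d) \<le> 3 * real q * ln (real s)" by simp
  have ls: "ln (real s) > 0" using s2 by simp
  show "real q \<ge> 1/3 * (real s * real d * ln (real n / real d) / ln (real s))"
    using C ls by (simp add: field_simps)
qed simp

end
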